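(* Let $L>0$, let $a$ satisfy (H_a), $l\in L^2(0,L)$, and let $\phi$ satisfy (H_φ) with $\phi(0)=+\infty$. Let $w\in H^1(0,L)$ with $\phi(w)\in L^2(0,L)$ satisfy $a(x)\frac{dw}{dx}=\phi(w)+l$ in $\mathcal D'(0,L)$. Let $0\le A<B\le L$, $x_0\in[A,B]$ with $w(x_0)=0$, and assume there is $M>0$ with $l(x)\ge -M$ for a.e. $x\in[A,B]$. Then for every $k>0$ there exists $\delta>0$ such that: $\frac{dw}{dx}\ge k$ a.e. in $[x_0-\delta,x_0+\delta]\cap[A,B]$; $w(x)\ge k(x-x_0)$ for all $x\in[x_0,x_0+\delta]\cap[A,B]$; and $w(x)\le k(x-x_0)$ for all $x\in[x_0-\delta,x_0]\cap[A,B]$.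
   Context: (H_a): $a\in L^\infty(0,L)$ and there are constants $0<\alpha<\beta$ with $\alpha\le a(x)\le\beta$ for a.e. $x\in(0,L)$. (H_φ): $\phi:\mathbb{R}\to\mathbb{R}\cup\{+\infty\}$ is continuous when $\mathbb{R}\cup\{+\infty\}$ carries its usual topology, and $\phi(s)<+\infty$ for every $s\neq0$. Functions in $H^1(0,L)$ are identified with their continuous representatives. *)

theory Defs
  imports "HOL-Analysis.Analysis"
begin

definition test_fun :: "real \<Rightarrow> (real \<Rightarrow> real) \<Rightarrow> bool" where
  "test_fun L \<psi> \<longleftrightarrow>
     (\<forall>n x. ((deriv ^^ n) \<psi>) differentiable (at x)) \<and>
     (\<exists>c d. 0 < c \<and> c \<le> d \<and> d < L \<and> (\<forall>x. x \<notin> {c..d} \<longrightarrow> \<psi> x = 0))"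

definition L2_on :: "real \<Rightarrow> (real \<Rightarrow> real) \<Rightarrow> bool" where
  "L2_on L f \<longleftrightarrow> f \<in> borel_measurable (lebesgue_on {0<..<L}) \<and>
     integrable (lebesgue_on {0<..<L}) (\<lambda>x. (f x)\<^sup>2)"

definition weak_deriv_on :: "real \<Rightarrow> (real \<Rightarrow> real) \<Rightarrow> (real \<Rightarrow> real) \<Rightarrow> bool" where
  "weak_deriv_on L w g \<longleftrightarrow>
     (\<forall>\<psi>. test_fun L \<psi> \<longrightarrow>
        integral\<^sup>L (lebesgue_on {0<..<L}) (\<lambda>x. w x * deriv \<psi> x)
        = - integral\<^sup>L (lebesgue_on {0<..<L}) (\<lambda>x. g x * \<psi> x))"

text \<open>w in H^1(0,L) with weak derivative g (w identified with its continuous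
representative on [0,L]).\<close>
definition H1_with_deriv :: "real \<Rightarrow> (real \<Rightarrow> real) \<Rightarrow> (real \<Rightarrow> real) \<Rightarrow> bool" where
  "H1_with_deriv L w g \<longleftrightarrow> continuous_on {0..L} w \<and> L2_on L w \<and> L2_on L g \<and>
     weak_deriv_on L w g"

definition distr_eq_on :: "real \<Rightarrow> (real \<Rightarrow> real) \<Rightarrow> (real \<Rightarrow> real) \<Rightarrow> bool" where
  "distr_eq_on L f h \<longleftrightarrow>
     (\<forall>\<psi>. test_fun L \<psi> \<longrightarrow>
        integral\<^sup>L (lebesgue_on {0<..<L}) (\<lambda>x. f x * \<psi> x)
        = integral\<^sup>L (lebesgue_on {0<..<L}) (\<lambda>x. h x * \<psi> x))"

end

theory Submission
  imports Defs "HOL-Computational_Algebra.Polynomial"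
begin


definition su :: "nat \<Rightarrow> (real\<Rightarrow>real) \<Rightarrow> bool" where
  "su n f \<longleftrightarrow> (\<forall>m\<le>n. \<forall>x. (deriv^^m) f differentiable (at x))"

lemma su_0: "su 0 f \<longleftrightarrow> (\<forall>x. f differentiable (at x))"
  by (simp add: su_def)

lemma su_Suc: "su (Suc n) f \<longleftrightarrow> (\<forall>x. f differentiable (at x)) \<and> su n (deriv f)"
proof -
  have e: "(deriv^^Suc m) f = (deriv^^m) (deriv f)" for m
    by (simp add: funpow_Suc_right del: funpow.simps)
  show ?thesis
    unfolding su_def
  proof safe
    fix m x assume "\<forall>m\<le>Suc n. \<forall>x. (deriv ^^ m) f differentiable at x" "m \<le> n"
    then show "(deriv ^^ m) (deriv f) differentiable at x" using e[of m] by (metis Suc_le_mono)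
  next
    fix x assume "\<forall>m\<le>Suc n. \<forall>x. (deriv ^^ m) f differentiable at x"
    then show "f differentiable at x" by (metis funpow_0 le0)
  next
    fix m x assume A: "\<forall>x. f differentiable at x" "\<forall>m\<le>n. \<forall>x. (deriv ^^ m) (deriv f) differentiable at x" "m \<le> Suc n"
    show "(deriv ^^ m) f differentiable at x"
    proof (cases m)
      case 0 then show ?thesis using A by simp
    next
      case (Suc k) then show ?thesis using A e[of k] by auto
    qed
  qed
qed

lemma su_mono: "su (Suc n) f \<Longrightarrow> su n f"
  by (simp add: su_def)

lemma su_diff: "su n f \<Longrightarrow> \<forall>x. f differentiable (at x)"
  by (auto simp: su_def)

lemma dd: "\<forall>x. f differentiable (at x) \<Longrightarrow> (f has_real_derivative deriv f x) (at x)"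
  by (simp add: DERIV_deriv_iff_real_differentiable)

lemma su_const: "su n (\<lambda>x. c)"
proof (induction n arbitrary: c)
  case 0 then show ?case by (simp add: su_0)
next
  case (Suc n)
  have "deriv (\<lambda>x. c) = (\<lambda>x. 0)" by (rule ext) simp
  then show ?case using Suc by (simp add: su_Suc)
qed

lemma su_add: "su n f \<Longrightarrow> su n g \<Longrightarrow> su n (\<lambda>x. f x + g x)"
proof (induction n arbitrary: f g)
  case 0 then show ?case by (auto simp: su_0 intro: differentiable_add)
next
  case (Suc n)
  have df: "\<forall>x. f differentiable (at x)" and dg: "\<forall>x. g differentiable (at x)"
    using Suc.prems su_diff by blast+
  have "deriv (\<lambda>x. f x + g x) = (\<lambda>x. deriv f x + deriv g x)"
    by (rule ext, rule DERIV_imp_deriv, rule DERIV_add[OF dd[OF df] dd[OF dg]])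
  then show ?case using Suc df dg by (auto simp: su_Suc intro: differentiable_add)
qed

lemma su_mult: "su n f \<Longrightarrow> su n g \<Longrightarrow> su n (\<lambda>x. f x * g x)"
proof (induction n arbitrary: f g)
  case 0 then show ?case by (auto simp: su_0 intro: differentiable_mult)
next
  case (Suc n)
  have df: "\<forall>x. f differentiable (at x)" and dg: "\<forall>x. g differentiable (at x)"
    using Suc.prems su_diff by blast+
  have "deriv (\<lambda>x. f x * g x) = (\<lambda>x. deriv f x * g x + f x * deriv g x)"
    by (rule ext, rule DERIV_imp_deriv) (use dd[OF df] dd[OF dg] in \<open>auto intro!: derivative_eq_intros\<close>)
  moreover have "su n (\<lambda>x. deriv f x * g x)" "su n (\<lambda>x. f x * deriv g x)"
  proof -
    have a: "su n f" "su n g" using Suc.prems su_mono by blast+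
    have b: "su n (deriv f)" "su n (deriv g)" using Suc.prems by (auto simp: su_Suc)
    show "su n (\<lambda>x. deriv f x * g x)" "su n (\<lambda>x. f x * deriv g x)"
      using Suc.IH[OF b(1) a(2)] Suc.IH[OF a(1) b(2)] by auto
  qed
  ultimately show ?case using Suc df dg by (auto simp: su_Suc intro: differentiable_mult su_add)
qed

lemma su_neg: "su n f \<Longrightarrow> su n (\<lambda>x. - f x)"
  using su_mult[OF su_const[of n "-1"], of f] by simp

lemma su_sub: "su n f \<Longrightarrow> su n g \<Longrightarrow> su n (\<lambda>x. f x - g x)"
  using su_add[OF _ su_neg, of n f g] by simp

lemma su_divide: "su n f \<Longrightarrow> su n g \<Longrightarrow> \<forall>x. g x \<noteq> 0 \<Longrightarrow> su n (\<lambda>x. f x / g x)"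
proof (induction n arbitrary: f g)
  case 0 then show ?case by (auto simp: su_0 intro: differentiable_divide)
next
  case (Suc n)
  have df: "\<forall>x. f differentiable (at x)" and dg: "\<forall>x. g differentiable (at x)"
    using Suc.prems su_diff by blast+
  have "deriv (\<lambda>x. f x / g x) = (\<lambda>x. (deriv f x * g x - f x * deriv g x) / (g x * g x))"
    by (rule ext, rule DERIV_imp_deriv) (use dd[OF df] dd[OF dg] Suc.prems in \<open>auto intro!: derivative_eq_intros simp: power2_eq_square field_simps\<close>)
  moreover have "su n (\<lambda>x. deriv f x * g x - f x * deriv g x)" "su n (\<lambda>x. g x * g x)"
  proof -
    have a: "su n f" "su n g" using Suc.prems su_mono by blast+
    have b: "su n (deriv f)" "su n (deriv g)" using Suc.prems by (auto simp: su_Suc)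
    show "su n (\<lambda>x. deriv f x * g x - f x * deriv g x)" "su n (\<lambda>x. g x * g x)"
      using a b by (auto intro!: su_sub su_mult)
  qed
  ultimately show ?case using Suc df dg
    by (auto simp: su_Suc intro: differentiable_divide)
qed

lemma diff_affine: fixes f :: "real\<Rightarrow>real" shows "\<forall>x. f differentiable (at x) \<Longrightarrow> (\<lambda>x. e * f (c * x + b)) differentiable (at y)"
proof -
  assume a: "\<forall>x. f differentiable (at x)"
  have "((\<lambda>x. e * f (c * x + b)) has_real_derivative e * (deriv f (c*y+b) * c)) (at y)"
    by (rule DERIV_cmult, rule DERIV_chain2[OF dd[OF a]]) (auto intro!: derivative_eq_intros)
  then show ?thesis unfolding real_differentiable_def by blast
qed

lemma su_affine: "su n f \<Longrightarrow> su n (\<lambda>x. e * f (c * x + b))"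
proof (induction n arbitrary: f e)
  case 0
  then show ?case unfolding su_0 using diff_affine by blast
next
  case (Suc n)
  have df: "\<forall>x. f differentiable (at x)" using Suc.prems su_diff by blast
  have "deriv (\<lambda>x. e * f (c * x + b)) = (\<lambda>x. (e * c) * deriv f (c * x + b))"
    apply (rule ext, rule DERIV_imp_deriv)
    apply (rule derivative_eq_intros DERIV_chain2[OF dd[OF df]] | simp)+
    done
  moreover have "su n (\<lambda>x. (e * c) * deriv f (c * x + b))"
    using Suc by (auto simp: su_Suc)
  moreover have "\<forall>x. (\<lambda>x. e * f (c * x + b)) differentiable at x"
    using df diff_affine by blast
  ultimately show ?case by (auto simp: su_Suc)
qed




definition Ef :: "real poly \<Rightarrow> real \<Rightarrow> real" where
  "Ef q t = (if t > 0 then poly q (1/t) * exp(-1/t) else 0)"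

definition dq :: "real poly \<Rightarrow> real poly" where
  "dq q = [:0,0,1:] * (q - pderiv q)"

lemma poly_exp_lim: fixes p :: "real poly" shows "((\<lambda>s. poly p s * exp (-s)) \<longlongrightarrow> 0) at_top"
proof -
  have "((\<lambda>s. \<Sum>i\<le>degree p. coeff p i * (s ^ i / exp s)) \<longlongrightarrow> (\<Sum>i\<le>degree p. coeff p i * 0)) at_top"
    by (intro tendsto_sum tendsto_mult tendsto_const tendsto_power_div_exp_0)
  moreover have "poly p s * exp (-s) = (\<Sum>i\<le>degree p. coeff p i * (s ^ i / exp s))" for s
    by (simp add: poly_altdef sum_distrib_right sum_divide_distrib exp_minus divide_inverse mult.assoc)
  ultimately show ?thesis by simp
qed

lemma poly_exp_lim0: fixes p :: "real poly" shows "((\<lambda>t. poly p (1/t) * exp (-1/t)) \<longlongrightarrow> 0) (at_right 0)"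
proof -
  have "((\<lambda>t. poly p (inverse t) * exp (- inverse t)) \<longlongrightarrow> 0) (at_right 0)"
    using filterlim_compose[OF poly_exp_lim[of p] filterlim_inverse_at_top_right] by (simp add: o_def)
  then show ?thesis by (simp add: divide_inverse)
qed

lemma dq_eval: "poly (dq q) (1/t) = (1/t)^2 * (poly q (1/t) - poly (pderiv q) (1/t))"
  by (simp add: dq_def power2_eq_square)

lemma Ef_deriv: "(Ef q has_real_derivative Ef (dq q) t) (at t)"
proof -
  consider "t > 0" | "t < 0" | "t = 0" by linarith
  then show ?thesis
  proof cases
    case 1
    have d: "((\<lambda>x. poly q (1/x) * exp(-1/x)) has_real_derivative Ef (dq q) t) (at t)"
    proof -
      have "((\<lambda>x. poly q (1/x) * exp(-1/x)) has_real_derivative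
          poly (pderiv q) (1/t) * (- 1 / t^2) * exp(-1/t) + poly q (1/t) * (exp(-1/t) * (1/t^2))) (at t)"
      proof -
        have i: "((\<lambda>x. 1/x) has_real_derivative (- 1 / t^2)) (at t)"
          using 1 DERIV_inverse[of t] by (simp add: divide_inverse power2_eq_square inverse_mult_distrib)
        have a: "((\<lambda>x. poly q (1/x)) has_real_derivative poly (pderiv q) (1/t) * (- 1 / t^2)) (at t)"
          by (rule DERIV_chain2[OF poly_DERIV i])
        have b: "((\<lambda>x. exp(-1/x)) has_real_derivative exp(-1/t) * (1/t^2)) (at t)"
          using DERIV_chain2[OF DERIV_exp DERIV_minus[OF i]] by simp
        show ?thesis using DERIV_mult[OF a b] by (simp add: algebra_simps)
      qed
      moreover have "poly (pderiv q) (1/t) * (- 1 / t^2) * exp(-1/t) + poly q (1/t) * (exp(-1/t) * (1/t^2))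
          = Ef (dq q) t"
        using 1 by (simp add: Ef_def dq_eval algebra_simps power2_eq_square)
      ultimately show ?thesis by simp
    qed
    show ?thesis
      by (rule has_field_derivative_transform_within_open[OF d, of "{0<..}"]) (use 1 in \<open>simp_all add: Ef_def\<close>)
  next
    case 2
    have z: "((\<lambda>x. 0) has_real_derivative Ef (dq q) t) (at t)" using 2 by (simp add: Ef_def)

    show ?thesis
      by (rule has_field_derivative_transform_within_open[OF z, of "{..<0}"]) (use 2 in \<open>simp_all add: Ef_def\<close>)
  next
    case 3
    have "((\<lambda>y. (Ef q y - Ef q 0) / (y - 0)) \<longlongrightarrow> 0) (at 0)"
      unfolding filterlim_at_split
    proof
      show "((\<lambda>y. (Ef q y - Ef q 0) / (y - 0)) \<longlongrightarrow> 0) (at_left 0)"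
        by (rule tendsto_eventually) (auto simp: Ef_def eventually_at_left_field intro: exI[of _ "-1"])
    next
      have "((\<lambda>t. poly ([:0,1:] * q) (1/t) * exp (-1/t)) \<longlongrightarrow> 0) (at_right 0)"
        by (rule poly_exp_lim0)
      moreover have "eventually (\<lambda>y. poly ([:0,1:] * q) (1/y) * exp (-1/y) = (Ef q y - Ef q 0) / (y - 0)) (at_right 0)"
        by (auto simp: Ef_def eventually_at_right_field intro!: exI[of _ 1])
      ultimately show "((\<lambda>y. (Ef q y - Ef q 0) / (y - 0)) \<longlongrightarrow> 0) (at_right 0)"
        by (rule Lim_transform_eventually)
    qed
    then show ?thesis using 3 by (simp add: has_field_derivative_iff Ef_def)
  qed
qed

lemma deriv_Ef: "deriv (Ef q) = Ef (dq q)"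
  by (rule ext, rule DERIV_imp_deriv, rule Ef_deriv)

lemma su_Ef: "su n (Ef q)"
proof (induction n arbitrary: q)
  case 0 then show ?case using Ef_deriv by (auto simp: su_0 real_differentiable_def)
next
  case (Suc n) then show ?case using Ef_deriv by (auto simp: su_Suc deriv_Ef real_differentiable_def)
qed




definition E :: "real \<Rightarrow> real" where "E = Ef 1"
definition Sst :: "real \<Rightarrow> real" where "Sst t = E t / (E t + E (1 - t))"

lemma E_eq: "E t = (if t > 0 then exp (-1/t) else 0)"
  by (simp add: E_def Ef_def)

lemma E_nonneg: "E t \<ge> 0" by (simp add: E_eq)
lemma E_pos: "t > 0 \<Longrightarrow> E t > 0" by (simp add: E_eq)
lemma E_zero: "t \<le> 0 \<Longrightarrow> E t = 0" by (simp add: E_eq)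

lemma E_deriv: "(E has_real_derivative Ef (dq 1) t) (at t)"
  unfolding E_def by (rule Ef_deriv)

lemma E'_nonneg: "Ef (dq 1) t \<ge> 0"
  by (simp add: Ef_def dq_def)

lemma den_pos: "E t + E (1 - t) > 0"
proof (cases "t > 0")
  case True then show ?thesis using E_pos[of t] E_nonneg[of "1-t"] by simp
next
  case False then show ?thesis using E_pos[of "1-t"] E_nonneg[of t] by simp
qed

lemma su_E: "su n E" unfolding E_def by (rule su_Ef)

lemma su_Sst: "su n Sst"
proof -
  have a: "su n (\<lambda>x. 1 * E ((-1) * x + 1))" by (rule su_affine[OF su_E])
  have "su n (\<lambda>x. E x / (E x + 1 * E ((-1) * x + 1)))"
    by (rule su_divide[OF su_E su_add[OF su_E a]]) (use den_pos in \<open>simp, metis less_irrefl\<close>)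
  moreover have "(\<lambda>x. E x / (E x + 1 * E ((-1) * x + 1))) = Sst" by (rule ext) (simp add: Sst_def)
  ultimately show ?thesis by simp
qed

lemma Sst_deriv: "(Sst has_real_derivative
   (Ef (dq 1) t * E (1 - t) + E t * Ef (dq 1) (1 - t)) / (E t + E (1 - t))^2) (at t)"
proof -
  have d1: "((\<lambda>x. E (1 - x)) has_real_derivative Ef (dq 1) (1 - t) * (-1)) (at t)"
    by (rule DERIV_chain2[OF E_deriv]) (auto intro!: derivative_eq_intros)
  have "((\<lambda>x. E x / (E x + E (1 - x))) has_real_derivative
     (Ef (dq 1) t * (E t + E (1 - t)) - E t * (Ef (dq 1) t + Ef (dq 1) (1 - t) * (-1))) / (E t + E (1 - t))^2) (at t)"
    using DERIV_divide[OF E_deriv DERIV_add[OF E_deriv d1]] den_pos[of t]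
    by (simp add: power2_eq_square)
  moreover have "(Ef (dq 1) t * (E t + E (1 - t)) - E t * (Ef (dq 1) t + Ef (dq 1) (1 - t) * (-1)))
      = Ef (dq 1) t * E (1 - t) + E t * Ef (dq 1) (1 - t)" by (simp add: algebra_simps)
  ultimately show ?thesis by (simp add: Sst_def[abs_def])
qed

lemma Sst_deriv_nonneg: "deriv Sst t \<ge> 0"
  using DERIV_imp_deriv[OF Sst_deriv[of t]] E'_nonneg E_nonneg by (simp add: zero_le_divide_iff)

lemma Sst_has_deriv: "(Sst has_real_derivative deriv Sst t) (at t)"
  using Sst_deriv DERIV_imp_deriv by metis

lemma Sst_mono: "s \<le> t \<Longrightarrow> Sst s \<le> Sst t"
  by (rule DERIV_nonneg_imp_nondecreasing[of s t Sst]) (use Sst_has_deriv Sst_deriv_nonneg in blast)+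

lemma Sst_zero: "t \<le> 0 \<Longrightarrow> Sst t = 0" by (simp add: Sst_def E_zero)
lemma Sst_one: "t \<ge> 1 \<Longrightarrow> Sst t = 1"
  using E_pos[of t] by (simp add: Sst_def E_zero)
lemma Sst_nonneg: "Sst t \<ge> 0" using Sst_mono[of 0 t] Sst_zero Sst_mono[of t 0] by (cases "t \<le> 0") auto
lemma Sst_le1: "Sst t \<le> 1" using Sst_mono[of t 1] Sst_one Sst_mono[of 1 t] by (cases "t \<le> 1") auto

lemma deriv_Sst_zero: "t < 0 \<or> t > 1 \<Longrightarrow> deriv Sst t = 0"
proof -
  assume "t < 0 \<or> t > 1"
  then show ?thesis
  proof
    assume t: "t < 0"
    have "((\<lambda>x. 0) has_real_derivative 0) (at t)" by simp
    then have "(Sst has_real_derivative 0) (at t)"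
      by (rule has_field_derivative_transform_within_open[of _ _ _ "{..<0}"]) (use t Sst_zero in simp_all)
    then show ?thesis by (rule DERIV_imp_deriv)
  next
    assume t: "t > 1"
    have "((\<lambda>x. 1) has_real_derivative 0) (at t)" by simp
    then have "(Sst has_real_derivative 0) (at t)"
      by (rule has_field_derivative_transform_within_open[of _ _ _ "{1<..}"]) (use t Sst_one in simp_all)
    then show ?thesis by (rule DERIV_imp_deriv)
  qed
qed

lemma cont_deriv_Sst: "continuous_on UNIV (deriv Sst)"
proof -
  have "su 1 Sst" by (rule su_Sst)
  then have "\<forall>x. deriv Sst differentiable (at x)" by (simp add: su_Suc su_0)
  then show ?thesis by (meson continuous_at_imp_continuous_on differentiable_imp_continuous_within)
qed




definition psi :: "real \<Rightarrow> real \<Rightarrow> real \<Rightarrow> real \<Rightarrow> real" where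
  "psi c d e t = Sst ((t - c) / e) - Sst ((t - d) / e)"

definition rho :: "real \<Rightarrow> real \<Rightarrow> real \<Rightarrow> real" where
  "rho c e t = deriv Sst ((t - c) / e) / e"

lemma su_shift: "e > 0 \<Longrightarrow> su n (\<lambda>t. Sst ((t - c) / e))"
proof -
  assume e: "e > 0"
  have "su n (\<lambda>t. 1 * Sst ((1/e) * t + (- c / e)))" by (rule su_affine[OF su_Sst])
  moreover have "(\<lambda>t. 1 * Sst ((1/e) * t + (- c / e))) = (\<lambda>t. Sst ((t - c) / e))"
    by (rule ext) (simp add: diff_divide_distrib)
  ultimately show ?thesis by simp
qed

lemma su_psi: "e > 0 \<Longrightarrow> su n (psi c d e)"
proof -
  assume e: "e > 0"
  have "su n (\<lambda>t. Sst ((t - c) / e) - Sst ((t - d) / e))"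
    by (rule su_sub[OF su_shift[OF e] su_shift[OF e]])
  then show ?thesis by (simp add: psi_def[abs_def])
qed

lemma test_psi:
  assumes "0 < c" "c \<le> d" "e > 0" "d + e < L"
  shows "test_fun L (psi c d e)"
proof -
  have A: "\<forall>n x. (deriv ^^ n) (psi c d e) differentiable at x"
    using su_psi[OF assms(3), of _ c d] unfolding su_def by auto
  have B: "psi c d e x = 0" if x: "x \<notin> {c..d+e}" for x
  proof -
    consider "x < c" | "x > d + e" using x by auto
    then show ?thesis
    proof cases
      case 1
      then have "(x - c)/e \<le> 0" "(x - d)/e \<le> 0" using assms by (auto simp: divide_nonpos_pos)
      then show ?thesis by (simp add: psi_def Sst_zero)
    next
      case 2
      then have "(x - c)/e \<ge> 1" "(x - d)/e \<ge> 1" using assms by (auto simp: field_simps)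
      then show ?thesis by (simp add: psi_def Sst_one)
    qed
  qed
  show ?thesis unfolding test_fun_def
    using A B assms by (intro conjI exI[of _ c] exI[of _ "d + e"]) auto
qed

lemma Sst_shift_deriv: "e > 0 \<Longrightarrow> ((\<lambda>t. Sst ((t - c) / e)) has_real_derivative rho c e t) (at t)"
proof -
  assume e: "e > 0"
  have "((\<lambda>t. (t-c)/e) has_real_derivative 1/e) (at t)" using e by (auto intro!: derivative_eq_intros)
  from DERIV_chain2[OF Sst_has_deriv this] show ?thesis unfolding rho_def by simp
qed

lemma deriv_psi: "e > 0 \<Longrightarrow> deriv (psi c d e) = (\<lambda>t. rho c e t - rho d e t)"
  unfolding psi_def[abs_def]
  by (rule ext, rule DERIV_imp_deriv, rule DERIV_diff) (auto intro: Sst_shift_deriv)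

lemma rho_nonneg: "e > 0 \<Longrightarrow> rho c e t \<ge> 0"
  unfolding rho_def using Sst_deriv_nonneg by simp

lemma rho_zero: "e > 0 \<Longrightarrow> t \<notin> {c..c+e} \<Longrightarrow> rho c e t = 0"
proof -
  assume e: "e > 0" and t: "t \<notin> {c..c+e}"
  then have "(t - c)/e < 0 \<or> (t - c)/e > 1"
    by (auto simp: field_simps)
  then show ?thesis unfolding rho_def using deriv_Sst_zero by simp
qed

lemma rho_cont: "e > 0 \<Longrightarrow> isCont (rho c e) t"
proof -
  assume e: "e > 0"
  have "continuous_on UNIV (\<lambda>x. deriv Sst ((x - c)/e) / e)"
    by (rule continuous_on_divide[OF continuous_on_compose2[OF cont_deriv_Sst]]) (use e in \<open>auto intro!: continuous_intros\<close>)
  then show ?thesis unfolding rho_def by (simp add: continuous_on_eq_continuous_at)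
qed

lemma psi_bounds: "e > 0 \<Longrightarrow> 0 \<le> psi c d e t \<and> psi c d e t \<le> 1" if "c \<le> d"
proof -
  assume e: "e > 0"
  have "(t - d)/e \<le> (t - c)/e" using e that by (simp add: divide_right_mono)
  then show ?thesis
    using Sst_mono[of "(t - d)/e" "(t - c)/e"] Sst_nonneg Sst_le1 by (simp add: psi_def) (smt (verit) Sst_nonneg Sst_le1)
qed

lemma psi_lim:
  assumes "c \<le> d" "e > 0"
  shows "(\<lambda>n. psi c d (e / Suc n) t) \<longlonglongrightarrow> indicator {c<..d} t"
proof -
  have en: "(\<lambda>n. e / Suc n) \<longlonglongrightarrow> 0"
    using LIMSEQ_Suc[OF lim_const_over_n[of e]] by simp
  consider "t \<le> c" | "c < t" "t \<le> d" | "t > d" by linarith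
  then show ?thesis
  proof cases
    case 1
    have "\<And>n. psi c d (e / Suc n) t = 0"
    proof -
      fix n
      have "(t - c) / (e / Suc n) \<le> 0" "(t - d) / (e / Suc n) \<le> 0"
        using 1 assms by (auto intro!: divide_nonpos_pos mult_nonpos_nonneg)
      then show "psi c d (e / Suc n) t = 0" by (simp add: psi_def Sst_zero)
    qed
    then show ?thesis using 1 by simp
  next
    case 2
    have ev: "eventually (\<lambda>n. e / Suc n < t - c) sequentially"
      using order_tendstoD(2)[OF en, of "t - c"] 2 by simp
    have "eventually (\<lambda>n. psi c d (e / Suc n) t = 1) sequentially"
      using ev
    proof (rule eventually_mono)
      fix n assume "e / Suc n < t - c"
      then have "(t - c) / (e / Suc n) \<ge> 1" using assms by (simp add: field_simps)
      moreover have "(t - d) / (e / Suc n) \<le> 0" using 2 assms by (auto intro!: divide_nonpos_pos mult_nonpos_nonneg)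
      ultimately show "psi c d (e / Suc n) t = 1" by (simp add: psi_def Sst_zero Sst_one)
    qed
    then show ?thesis using 2 by (simp add: tendsto_eventually)
  next
    case 3
    have ev: "eventually (\<lambda>n. e / Suc n < t - d) sequentially"
      using order_tendstoD(2)[OF en, of "t - d"] 3 by simp
    have "eventually (\<lambda>n. psi c d (e / Suc n) t = 0) sequentially"
      using ev
    proof (rule eventually_mono)
      fix n assume "e / Suc n < t - d"
      then have "(t - d) / (e / Suc n) \<ge> 1" using assms by (simp add: field_simps)
      moreover have "(t - c) / (e / Suc n) \<ge> 1" using \<open>(t - d) / (e / Suc n) \<ge> 1\<close> assms 3
        by (smt (verit) divide_right_mono of_nat_0_less_iff zero_less_Suc divide_pos_pos)
      ultimately show "psi c d (e / Suc n) t = 0" by (simp add: psi_def Sst_zero Sst_one)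
    qed
    then show ?thesis using 3 by (simp add: tendsto_eventually)
  qed
qed




lemma conv_int:
  fixes f :: "real \<Rightarrow> real"
  assumes "0 < p" "p \<le> q" "q < L" "\<And>x. x \<notin> {p..q} \<Longrightarrow> f x = 0"
    and "\<And>x. p \<le> x \<Longrightarrow> x \<le> q \<Longrightarrow> isCont f x"
  shows "integrable (lebesgue_on {0<..<L}) f \<and>
    integral\<^sup>L (lebesgue_on {0<..<L}) f = integral\<^sup>L lborel (\<lambda>x. f x * indicator {p..q} x)"
proof -
  have I: "integrable lborel (\<lambda>x. f x * indicator {p..q} x)"
    by (rule borel_integrable_atLeastAtMost) (use assms in auto)
  have meas: "(\<lambda>x. f x * indicator {p..q} x) \<in> borel_measurable lborel"
    using I by (rule borel_measurable_integrable)
  have eq: "(\<lambda>x. indicator {0<..<L} x *\<^sub>R f x) = (\<lambda>x. f x * indicator {p..q} x)"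
    using assms(1-4) by (auto simp: fun_eq_iff indicator_def)
  have S: "{0<..<L} \<inter> space lebesgue \<in> sets lebesgue" by simp
  show ?thesis
    unfolding integrable_restrict_space[OF S] integral_restrict_space[OF S] eq
    using integrable_completion[OF meas] integral_completion[OF meas] I by simp
qed

lemma rho_int:
  assumes "0 < c" "e > 0" "c + e < L"
  shows "integrable (lebesgue_on {0<..<L}) (rho c e) \<and> integral\<^sup>L (lebesgue_on {0<..<L}) (rho c e) = 1"
proof -
  have ci: "integrable (lebesgue_on {0<..<L}) (rho c e) \<and>
    integral\<^sup>L (lebesgue_on {0<..<L}) (rho c e) = integral\<^sup>L lborel (\<lambda>x. rho c e x * indicator {c..c+e} x)"
    by (rule conv_int) (use assms rho_zero rho_cont in auto)
  have "integral\<^sup>L lborel (\<lambda>x. indicator {c..c+e} x *\<^sub>R rho c e x) = Sst ((c + e - c)/e) - Sst ((c - c)/e)"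
  proof (rule integral_FTC_atLeastAtMost[where F="\<lambda>t. Sst ((t - c)/e)"])
    show "c \<le> c + e" using assms by simp
    show "((\<lambda>t. Sst ((t - c) / e)) has_vector_derivative rho c e x) (at x within {c..c + e})" for x
      using Sst_shift_deriv[OF assms(2), of c x]
      by (simp add: has_real_derivative_iff_has_vector_derivative has_vector_derivative_at_within)
    show "continuous_on {c..c + e} (rho c e)"
      using rho_cont[OF assms(2)] by (simp add: continuous_at_imp_continuous_on)
  qed
  also have "\<dots> = 1" using assms by (simp add: Sst_zero Sst_one)
  finally show ?thesis using ci by (simp add: mult.commute)
qed

lemma moll:
  assumes c: "0 < c" and e: "e > 0" "c + e < L" and w: "continuous_on {0..L} w"
  shows "(\<lambda>n. integral\<^sup>L (lebesgue_on {0<..<L}) (\<lambda>t. w t * rho c (e / Suc n) t)) \<longlonglongrightarrow> w c"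
proof (rule LIMSEQ_I)
  fix r :: real assume r: "r > 0"
  have cw: "isCont w t" if "0 < t" "t < L" for t
    using continuous_on_interior[OF w, of t] that by simp
  have "isCont w c" using cw c e by simp
  then obtain \<eta> where \<eta>: "\<eta> > 0" "\<And>t. \<bar>t - c\<bar> < \<eta> \<Longrightarrow> \<bar>w t - w c\<bar> < r/2"
    unfolding isCont_def LIM_eq using r
    by (metis abs_zero cancel_comm_monoid_add_class.diff_cancel divide_pos_pos real_norm_def zero_less_numeral)
  obtain no :: nat where no: "e / \<eta> < no" using reals_Archimedean2 by blast
  have "norm (integral\<^sup>L (lebesgue_on {0<..<L}) (\<lambda>t. w t * rho c (e / Suc n) t) - w c) < r"
    if n: "no \<le> n" for n
  proof -
    let ?en = "e / Suc n"
    have en: "?en > 0" "?en \<le> e" using e by (auto simp: field_simps)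
    have en2: "?en < \<eta>"
    proof -
      have "e / \<eta> < Suc n" using no n by linarith
      then show ?thesis using \<eta>(1) e by (simp add: field_simps)
    qed
    have CI: "integrable (lebesgue_on {0<..<L}) g \<and>
        integral\<^sup>L (lebesgue_on {0<..<L}) g = integral\<^sup>L lborel (\<lambda>x. g x * indicator {c..c+?en} x)"
      if "\<And>x. x \<notin> {c..c+?en} \<Longrightarrow> g x = 0" "\<And>x. c \<le> x \<Longrightarrow> x \<le> c+?en \<Longrightarrow> isCont g x" for g :: "real \<Rightarrow> real"
      by (rule conv_int[where p=c and q="c+?en"]) (use that c e en in auto)
    have rz: "\<And>x. x \<notin> {c..c+?en} \<Longrightarrow> rho c ?en x = 0" using rho_zero en by blast
    have rc: "\<And>x. isCont (rho c ?en) x" using rho_cont en by blast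
    have wc: "\<And>x. c \<le> x \<Longrightarrow> x \<le> c+?en \<Longrightarrow> isCont w x" using cw c e en by auto
    have I1: "integrable (lebesgue_on {0<..<L}) (\<lambda>t. w t * rho c ?en t)"
      using CI[of "\<lambda>t. w t * rho c ?en t"] rz rc wc by (auto intro!: continuous_intros)
    have I2: "integrable (lebesgue_on {0<..<L}) (\<lambda>t. (w t - w c) * rho c ?en t)"
      using CI[of "\<lambda>t. (w t - w c) * rho c ?en t"] rz rc wc by (auto intro!: continuous_intros)
    have R: "integrable (lebesgue_on {0<..<L}) (rho c ?en)" "integral\<^sup>L (lebesgue_on {0<..<L}) (rho c ?en) = 1"
      using rho_int[of c ?en L] c e en by auto
    have "integral\<^sup>L (lebesgue_on {0<..<L}) (\<lambda>t. w t * rho c ?en t) - w c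
        = integral\<^sup>L (lebesgue_on {0<..<L}) (\<lambda>t. w t * rho c ?en t) - integral\<^sup>L (lebesgue_on {0<..<L}) (\<lambda>t. w c * rho c ?en t)"
      using R by simp
    also have "\<dots> = integral\<^sup>L (lebesgue_on {0<..<L}) (\<lambda>t. (w t - w c) * rho c ?en t)"
      using I1 R(1) by (simp add: left_diff_distrib Bochner_Integration.integral_diff[symmetric])
    finally have eq: "integral\<^sup>L (lebesgue_on {0<..<L}) (\<lambda>t. w t * rho c ?en t) - w c
        = integral\<^sup>L (lebesgue_on {0<..<L}) (\<lambda>t. (w t - w c) * rho c ?en t)" .
    have "norm (integral\<^sup>L (lebesgue_on {0<..<L}) (\<lambda>t. (w t - w c) * rho c ?en t))
        \<le> integral\<^sup>L (lebesgue_on {0<..<L}) (\<lambda>t. norm ((w t - w c) * rho c ?en t))"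
      by (rule integral_norm_bound)
    also have "\<dots> \<le> integral\<^sup>L (lebesgue_on {0<..<L}) (\<lambda>t. r/2 * rho c ?en t)"
    proof (rule integral_mono)
      show "integrable (lebesgue_on {0<..<L}) (\<lambda>t. norm ((w t - w c) * rho c ?en t))"
        using I2 by (rule integrable_norm)
      show "integrable (lebesgue_on {0<..<L}) (\<lambda>t. r/2 * rho c ?en t)"
        using R(1) by simp
      fix t
      show "norm ((w t - w c) * rho c ?en t) \<le> r/2 * rho c ?en t"
      proof (cases "t \<in> {c..c+?en}")
        case True
        then have "\<bar>t - c\<bar> < \<eta>" using en2 by auto
        then have "\<bar>w t - w c\<bar> \<le> r/2" using \<eta>(2) by fastforce
        then show ?thesis using rho_nonneg[OF en(1), of c t]
          by (simp add: abs_mult del: of_nat_Suc) (metis mult.commute mult_right_mono mult.assoc)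
      next
        case False then show ?thesis using rz by simp
      qed
    qed
    also have "\<dots> = r/2" using R by simp
    finally show ?thesis using eq r by simp
  qed
  then show "\<exists>no. \<forall>n\<ge>no. norm (integral\<^sup>L (lebesgue_on {0<..<L}) (\<lambda>t. w t * rho c (e / Suc n) t) - w c) < r"
    by blast
qed

lemma w_rho_int:
  assumes c: "0 < c" and e: "e > 0" "c + e < L" and w: "continuous_on {0..L} w"
  shows "integrable (lebesgue_on {0<..<L}) (\<lambda>t. w t * rho c e t)"
proof -
  have cw: "isCont w t" if "0 < t" "t < L" for t
    using continuous_on_interior[OF w, of t] that by simp
  have "integrable (lebesgue_on {0<..<L}) (\<lambda>t. w t * rho c e t) \<and> integral\<^sup>L (lebesgue_on {0<..<L}) (\<lambda>t. w t * rho c e t) = integral\<^sup>L lborel (\<lambda>x. w x * rho c e x * indicator {c..c+e} x)"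
    by (rule conv_int[where p=c and q="c+e"]) (use c e cw rho_zero[OF e(1)] rho_cont[OF e(1)] in \<open>auto intro!: continuous_intros\<close>)
  then show ?thesis by simp
qed

lemma finM: "finite_measure (lebesgue_on {0<..<(L::real)})"
  by (rule finite_measure_lebesgue_on) simp

lemma L2_int: "L2_on L f \<Longrightarrow> integrable (lebesgue_on {0<..<L}) f"
  unfolding L2_on_def using finite_measure.square_integrable_imp_integrable[OF finM] by blast

lemma psi_cont: "e > 0 \<Longrightarrow> continuous_on UNIV (psi c d e)"
proof -
  assume e: "e > 0"
  have "\<forall>x. psi c d e differentiable (at x)" using su_psi[OF e, of 0 c d] by (simp add: su_0)
  then show ?thesis by (meson continuous_at_imp_continuous_on differentiable_imp_continuous_within)
qed

lemma dc:
  assumes h: "integrable (lebesgue_on {0<..<L}) h" and cd: "c \<le> d" and e: "e > 0"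
  shows "(\<lambda>n. integral\<^sup>L (lebesgue_on {0<..<L}) (\<lambda>t. h t * psi c d (e / Suc n) t))
     \<longlonglongrightarrow> integral\<^sup>L (lebesgue_on {0<..<L}) (\<lambda>t. h t * indicator {c<..d} t)"
proof (rule integral_dominated_convergence[where w="\<lambda>x. norm (h x)"])
  have hm: "h \<in> borel_measurable (lebesgue_on {0<..<L})" using h by (rule borel_measurable_integrable)
  have im: "(\<lambda>t. indicator {c<..d} t :: real) \<in> borel_measurable (lebesgue_on {0<..<L})"
    by (rule measurable_restrict_space1) (auto intro: measurable_completion)
  show "(\<lambda>t. h t * indicator {c<..d} t) \<in> borel_measurable (lebesgue_on {0<..<L})"
    using hm im by (rule borel_measurable_times)
  show "(\<lambda>t. h t * psi c d (e / Suc n) t) \<in> borel_measurable (lebesgue_on {0<..<L})" for n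
  proof -
    have "psi c d (e / Suc n) \<in> borel_measurable (lebesgue_on {0<..<L})"
      by (rule continuous_imp_measurable_on_sets_lebesgue)
         (use psi_cont[of "e / Suc n" c d] e in \<open>auto intro: continuous_on_subset\<close>)
    then show ?thesis using hm by (intro borel_measurable_times)
  qed
  show "integrable (lebesgue_on {0<..<L}) (\<lambda>x. norm (h x))" using h by (rule integrable_norm)
  show "AE x in lebesgue_on {0<..<L}. (\<lambda>n. h x * psi c d (e / Suc n) x) \<longlonglongrightarrow> h x * indicator {c<..d} x"
    by (intro AE_I2 tendsto_mult tendsto_const psi_lim cd e)
  show "AE x in lebesgue_on {0<..<L}. norm (h x * psi c d (e / Suc n) x) \<le> norm (h x)" for n
  proof (intro AE_I2)
    fix x
    have "e / Suc n > 0" using e by simp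
    then have "0 \<le> psi c d (e / Suc n) x \<and> psi c d (e / Suc n) x \<le> 1" using psi_bounds cd by blast
    then show "norm (h x * psi c d (e / Suc n) x) \<le> norm (h x)"
      by (simp add: abs_mult mult_left_le)
  qed
qed

lemma ftc:
  assumes w: "H1_with_deriv L w w'" and cd: "0 < c" "c < d" "d < L"
  shows "w d - w c = integral\<^sup>L (lebesgue_on {0<..<L}) (\<lambda>t. w' t * indicator {c<..d} t)"
proof -
  define e where "e = (L - d) / 2"
  have e: "e > 0" "d + e < L" using cd unfolding e_def by (argo, argo)
  let ?M = "lebesgue_on {0<..<L}"
  have wc: "continuous_on {0..L} w" and w'i: "integrable ?M w'" and wd: "weak_deriv_on L w w'"
    using w L2_int[of L w'] unfolding H1_with_deriv_def by blast+
  have seq: "integral\<^sup>L ?M (\<lambda>t. w t * rho c (e / Suc n) t) - integral\<^sup>L ?M (\<lambda>t. w t * rho d (e / Suc n) t)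
      = - integral\<^sup>L ?M (\<lambda>t. w' t * psi c d (e / Suc n) t)" for n
  proof -
    let ?en = "e / Suc n"
    have en: "?en > 0" "?en \<le> e" using e by (simp_all add: divide_le_eq)
    have t: "test_fun L (psi c d ?en)" by (rule test_psi) (use cd e en in linarith)+
    have i1: "integrable ?M (\<lambda>t. w t * rho c ?en t)" by (rule w_rho_int) (use cd e en wc in linarith)+
    have i2: "integrable ?M (\<lambda>t. w t * rho d ?en t)" by (rule w_rho_int) (use cd e en wc in linarith)+
    have "integral\<^sup>L ?M (\<lambda>t. w t * deriv (psi c d ?en) t) = - integral\<^sup>L ?M (\<lambda>t. w' t * psi c d ?en t)"
      using wd t unfolding weak_deriv_on_def by blast
    moreover have "integral\<^sup>L ?M (\<lambda>t. w t * deriv (psi c d ?en) t)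
       = integral\<^sup>L ?M (\<lambda>t. w t * rho c ?en t) - integral\<^sup>L ?M (\<lambda>t. w t * rho d ?en t)"
      unfolding deriv_psi[OF en(1)] right_diff_distrib
      using Bochner_Integration.integral_diff[OF i1 i2] by simp
    ultimately show ?thesis by simp
  qed
  have l1: "(\<lambda>n. integral\<^sup>L ?M (\<lambda>t. w t * rho c (e / Suc n) t) - integral\<^sup>L ?M (\<lambda>t. w t * rho d (e / Suc n) t))
      \<longlonglongrightarrow> w c - w d"
  proof (intro tendsto_diff moll)
  qed (use cd e wc in auto)
  have l2: "(\<lambda>n. - integral\<^sup>L ?M (\<lambda>t. w' t * psi c d (e / Suc n) t))
      \<longlonglongrightarrow> - integral\<^sup>L ?M (\<lambda>t. w' t * indicator {c<..d} t)"
    by (intro tendsto_minus dc w'i e) (use cd in auto)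
  have "w c - w d = - integral\<^sup>L ?M (\<lambda>t. w' t * indicator {c<..d} t)"
    using LIMSEQ_unique[OF l1] l2 seq by simp
  then show ?thesis by simp
qed

lemma distr_int:
  assumes eq: "distr_eq_on L f g" and f: "integrable (lebesgue_on {0<..<L}) f"
    and g: "integrable (lebesgue_on {0<..<L}) g" and cd: "0 < c" "c \<le> d" "d < L"
  shows "integral\<^sup>L (lebesgue_on {0<..<L}) (\<lambda>t. f t * indicator {c<..d} t)
       = integral\<^sup>L (lebesgue_on {0<..<L}) (\<lambda>t. g t * indicator {c<..d} t)"
proof -
  define e where "e = (L - d) / 2"
  have e: "e > 0" "d + e < L" using cd unfolding e_def by (argo, argo)
  let ?M = "lebesgue_on {0<..<L}"
  have seq: "integral\<^sup>L ?M (\<lambda>t. f t * psi c d (e / Suc n) t) = integral\<^sup>L ?M (\<lambda>t. g t * psi c d (e / Suc n) t)" for n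
  proof -
    let ?en = "e / Suc n"
    have en: "?en > 0" "?en \<le> e" using e by (simp_all add: divide_le_eq)
    have t: "test_fun L (psi c d ?en)" by (rule test_psi) (use cd e en in linarith)+
    then show ?thesis using eq unfolding distr_eq_on_def by blast
  qed
  have l1: "(\<lambda>n. integral\<^sup>L ?M (\<lambda>t. f t * psi c d (e / Suc n) t)) \<longlonglongrightarrow> integral\<^sup>L ?M (\<lambda>t. f t * indicator {c<..d} t)"
    by (rule dc) (use f cd e in auto)
  have l2: "(\<lambda>n. integral\<^sup>L ?M (\<lambda>t. g t * psi c d (e / Suc n) t)) \<longlonglongrightarrow> integral\<^sup>L ?M (\<lambda>t. g t * indicator {c<..d} t)"
    by (rule dc) (use g cd e in auto)
  show ?thesis using LIMSEQ_unique[OF l1] l2 seq by simp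
qed




lemma zero_lborel:
  fixes G :: "real \<Rightarrow> real"
  assumes Gi: "integrable lborel G" and z: "\<And>x. integral\<^sup>L lborel (\<lambda>t. G t * indicator {x<..} t) = 0"
  shows "AE x in lborel. G x = 0"
proof -
  have Gm[measurable]: "G \<in> borel_measurable lborel" using Gi by (rule borel_measurable_integrable)
  define P where "P x = max 0 (G x)" for x
  define N where "N x = max 0 (- G x)" for x
  have Pm[measurable]: "P \<in> borel_measurable lborel" unfolding P_def[abs_def] by measurable
  have Nm[measurable]: "N \<in> borel_measurable lborel" unfolding N_def[abs_def] by measurable
  have iP: "integrable lborel (\<lambda>t. P t * indicator {x<..} t)" for x
    by (rule Bochner_Integration.integrable_bound[OF Gi]) (auto simp: P_def indicator_def)
  have iN: "integrable lborel (\<lambda>t. N t * indicator {x<..} t)" for x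
    by (rule Bochner_Integration.integrable_bound[OF Gi]) (auto simp: N_def indicator_def)
  have eqPN: "integral\<^sup>L lborel (\<lambda>t. P t * indicator {x<..} t) = integral\<^sup>L lborel (\<lambda>t. N t * indicator {x<..} t)" for x
  proof -
    have "(\<lambda>t. G t * indicator {x<..} t) = (\<lambda>t. P t * indicator {x<..} t - N t * indicator {x<..} t)"
      by (auto simp: fun_eq_iff P_def N_def indicator_def)
    then have "integral\<^sup>L lborel (\<lambda>t. P t * indicator {x<..} t) - integral\<^sup>L lborel (\<lambda>t. N t * indicator {x<..} t) = 0"
      using z[of x] Bochner_Integration.integral_diff[OF iP iN] by simp
    then show ?thesis by simp
  qed
  have emP: "emeasure (density lborel (\<lambda>x. ennreal (P x))) {x<..} = ennreal (integral\<^sup>L lborel (\<lambda>t. P t * indicator {x<..} t))" for x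
  proof -
    have "emeasure (density lborel (\<lambda>x. ennreal (P x))) {x<..} = (\<integral>\<^sup>+ t. ennreal (P t * indicator {x<..} t) \<partial>lborel)"
      by (subst emeasure_density) (auto intro!: nn_integral_cong simp: indicator_def)
    also have "\<dots> = ennreal (integral\<^sup>L lborel (\<lambda>t. P t * indicator {x<..} t))"
      by (rule nn_integral_eq_integral[OF iP]) (auto simp: P_def)
    finally show ?thesis .
  qed
  have emN: "emeasure (density lborel (\<lambda>x. ennreal (N x))) {x<..} = ennreal (integral\<^sup>L lborel (\<lambda>t. N t * indicator {x<..} t))" for x
  proof -
    have "emeasure (density lborel (\<lambda>x. ennreal (N x))) {x<..} = (\<integral>\<^sup>+ t. ennreal (N t * indicator {x<..} t) \<partial>lborel)"
      by (subst emeasure_density) (auto intro!: nn_integral_cong simp: indicator_def)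
    also have "\<dots> = ennreal (integral\<^sup>L lborel (\<lambda>t. N t * indicator {x<..} t))"
      by (rule nn_integral_eq_integral[OF iN]) (auto simp: N_def)
    finally show ?thesis .
  qed
  have "density lborel (\<lambda>x. ennreal (P x)) = density lborel (\<lambda>x. ennreal (N x))"
  proof (rule measure_eqI_lessThan)
    show "sets (density lborel (\<lambda>x. ennreal (P x))) = sets borel" by simp
    show "sets (density lborel (\<lambda>x. ennreal (N x))) = sets borel" by simp
    show "emeasure (density lborel (\<lambda>x. ennreal (P x))) {x<..} < \<infinity>" for x
      using emP[of x] by simp
    show "emeasure (density lborel (\<lambda>x. ennreal (P x))) {x<..} = emeasure (density lborel (\<lambda>x. ennreal (N x))) {x<..}" for x
      using emP[of x] emN[of x] eqPN[of x] by simp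
  qed
  then have "AE x in lborel. ennreal (P x) = ennreal (N x)"
    by (intro sigma_finite_measure.density_unique[OF sigma_finite_lborel]) auto
  then show ?thesis
    by eventually_elim (auto simp: P_def N_def max_def split: if_splits)
qed

lemma zero_lebesgue:
  fixes G :: "real \<Rightarrow> real"
  assumes Gi: "integrable lebesgue G" and z: "\<And>x. integral\<^sup>L lebesgue (\<lambda>t. G t * indicator {x<..} t) = 0"
  shows "AE x in lebesgue. G x = 0"
proof -
  have Gm': "G \<in> borel_measurable lebesgue" using Gi by (rule borel_measurable_integrable)
  then obtain G' where G'm: "G' \<in> borel_measurable lborel" and ae: "AE x in lborel. G x = G' x"
    using completion_ex_borel_measurable_real by blast
  have ae': "AE x in lebesgue. G x = G' x" using ae by (rule AE_completion)
  have "integrable lebesgue G'"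
    by (rule integrable_cong_AE_imp[OF Gi]) (use ae' measurable_completion[OF G'm] in auto)
  then have G'i: "integrable lborel G'" using integrable_completion[OF G'm] by simp
  have "AE x in lborel. G' x = 0"
  proof (rule zero_lborel[OF G'i])
    fix x
    have m: "(\<lambda>t. G' t * indicator {x<..} t) \<in> borel_measurable lborel" using G'm by measurable
    have "integral\<^sup>L lborel (\<lambda>t. G' t * indicator {x<..} t) = integral\<^sup>L lebesgue (\<lambda>t. G' t * indicator {x<..} t)"
      using integral_completion[OF m] by simp
    also have "\<dots> = integral\<^sup>L lebesgue (\<lambda>t. G t * indicator {x<..} t)"
    proof (rule integral_cong_AE)
      show "(\<lambda>t. G' t * indicator {x<..} t) \<in> borel_measurable lebesgue"
        using measurable_completion[OF m] by simp
      have "(\<lambda>t. indicator {x<..} t :: real) \<in> borel_measurable lebesgue"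
        by (rule measurable_completion) simp
      then show "(\<lambda>t. G t * indicator {x<..} t) \<in> borel_measurable lebesgue"
        using Gm' by (rule borel_measurable_times[rotated])
      show "AE t in lebesgue. G' t * indicator {x<..} t = G t * indicator {x<..} t"
        using ae' by eventually_elim simp
    qed
    finally show "integral\<^sup>L lborel (\<lambda>t. G' t * indicator {x<..} t) = 0" using z by simp
  qed
  then have "AE x in lebesgue. G' x = 0" by (rule AE_completion)
  with ae' show ?thesis by eventually_elim simp
qed

lemma ind_meas: "(\<lambda>t. indicator S t :: real) \<in> borel_measurable (lebesgue_on {0<..<(L::real)})"
  if "S \<in> sets borel" for S :: "real set"
  by (rule measurable_restrict_space1) (use that in \<open>auto intro: measurable_completion\<close>)

lemma int_ind:
  fixes f :: "real \<Rightarrow> real"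
  assumes "integrable (lebesgue_on {0<..<L}) f"
  shows "integrable (lebesgue_on {0<..<L}) (\<lambda>t. f t * indicator {c<..d} t)"
proof (rule Bochner_Integration.integrable_bound[OF assms])
  show "(\<lambda>t. f t * indicator {c<..d} t) \<in> borel_measurable (lebesgue_on {0<..<L})"
    using borel_measurable_integrable[OF assms] ind_meas[of "{c<..d}" L] by (intro borel_measurable_times) auto
  show "AE x in lebesgue_on {0<..<L}. norm (f x * indicator {c<..d} x) \<le> norm (f x)"
    by (intro AE_I2) (auto simp: indicator_def)
qed

lemma zero_interval:
  fixes g :: "real \<Rightarrow> real"
  assumes gi: "integrable (lebesgue_on {0<..<L}) g"
    and z: "\<And>c d. 0 < c \<Longrightarrow> c \<le> d \<Longrightarrow> d < L \<Longrightarrow> integral\<^sup>L (lebesgue_on {0<..<L}) (\<lambda>t. g t * indicator {c<..d} t) = 0"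
    and pq: "0 < p" "p \<le> q" "q < L"
  shows "AE x in lebesgue. x \<in> {p<..q} \<longrightarrow> g x = 0"
proof -
  have S: "{0<..<L} \<inter> space lebesgue \<in> sets lebesgue" by simp
  have g0: "integrable lebesgue (\<lambda>x. indicator {0<..<L} x *\<^sub>R g x)"
    using gi by (subst (asm) integrable_restrict_space[OF S])
  define G where "G t = g t * indicator {p<..q} t" for t
  have GG: "G = (\<lambda>t. indicator {p<..q} t *\<^sub>R (indicator {0<..<L} t *\<^sub>R g t))"
    using pq by (auto simp: fun_eq_iff G_def indicator_def)
  have Gi: "integrable lebesgue G" unfolding GG
    by (rule integrable_mult_indicator[OF _ g0]) simp
  have "AE x in lebesgue. G x = 0"
  proof (rule zero_lebesgue[OF Gi])
    fix x
    show "integral\<^sup>L lebesgue (\<lambda>t. G t * indicator {x<..} t) = 0"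
    proof (cases "max x p \<le> q")
      case True
      have eq: "(\<lambda>t. G t * indicator {x<..} t) = (\<lambda>t. indicator {0<..<L} t *\<^sub>R (g t * indicator {max x p<..q} t))"
        using pq by (auto simp: fun_eq_iff G_def indicator_def)
      have "integral\<^sup>L lebesgue (\<lambda>t. G t * indicator {x<..} t) = integral\<^sup>L (lebesgue_on {0<..<L}) (\<lambda>t. g t * indicator {max x p<..q} t)"
        unfolding eq integral_restrict_space[OF S] ..
      also have "\<dots> = 0" by (rule z) (use True pq in auto)
      finally show ?thesis .
    next
      case False
      then have "(\<lambda>t. G t * indicator {x<..} t) = (\<lambda>t. 0)"
        by (auto simp: fun_eq_iff G_def indicator_def)
      then show ?thesis by simp
    qed
  qed
  then show ?thesis by eventually_elim (auto simp: G_def indicator_def split: if_splits)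
qed

lemma zero_all:
  fixes g :: "real \<Rightarrow> real"
  assumes gi: "integrable (lebesgue_on {0<..<L}) g" and Lp: "L > 0"
    and z: "\<And>c d. 0 < c \<Longrightarrow> c \<le> d \<Longrightarrow> d < L \<Longrightarrow> integral\<^sup>L (lebesgue_on {0<..<L}) (\<lambda>t. g t * indicator {c<..d} t) = 0"
  shows "AE x in lebesgue. x \<in> {0<..<L} \<longrightarrow> g x = 0"
proof -
  have X: "AE x in lebesgue. x \<in> {L / (real n + 2)<..L - L/(real n + 2)} \<longrightarrow> g x = 0" for n :: nat
    proof -
      have a: "0 < L / (real n + 2)" using Lp by simp
      have b: "L / (real n + 2) \<le> L/2" using Lp by (intro divide_left_mono) auto
      show ?thesis by (rule zero_interval[OF gi z]) (use a b Lp in \<open>auto simp: field_simps\<close>)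
    qed
  have "AE x in lebesgue. \<forall>n::nat. x \<in> {L / (real n + 2)<..L - L/(real n + 2)} \<longrightarrow> g x = 0"
    unfolding AE_all_countable using X by blast
  then show ?thesis
  proof eventually_elim
    case (elim x)
    show ?case
    proof
      assume x: "x \<in> {0<..<L}"
      define m where "m = min x (L - x)"
      have m: "m > 0" using x by (auto simp: m_def)
      obtain n :: nat where n: "L / m < n" using reals_Archimedean2 by blast
      have "L / (real n + 2) < m"
      proof -
        have "L < n * m" using n m by (simp add: field_simps)
        also have "\<dots> \<le> (n+2) * m" using m by (intro mult_right_mono) auto
        finally show ?thesis by (simp add: field_simps)
      qed
      then have "x \<in> {L / (real n + 2)<..L - L/(real n + 2)}" unfolding m_def by auto
      then show "g x = 0" using elim by blast
    qed
  qed
qed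




lemma int_const:
  fixes c d L k :: real
  assumes "0 < c" "c \<le> d" "d < L"
  shows "integrable (lebesgue_on {0<..<L}) (\<lambda>t. k * indicator {c<..d} t) \<and>
         integral\<^sup>L (lebesgue_on {0<..<L}) (\<lambda>t. k * indicator {c<..d} t) = k * (d - c)"
proof -
  have S: "{0<..<L} \<inter> space lebesgue \<in> sets lebesgue" by simp
  have eq: "(\<lambda>x. indicator {0<..<L} x *\<^sub>R (k * indicator {c<..d} x)) = (\<lambda>x. k * indicator {c<..d} x :: real)"
    using assms by (auto simp: fun_eq_iff indicator_def)
  have m: "(\<lambda>x. k * indicator {c<..d} x :: real) \<in> borel_measurable lborel" by measurable
  have Ii: "integrable lborel (indicator {c<..d} :: real \<Rightarrow> real)"
    using assms by (intro integrable_real_indicator) auto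
  have I: "integrable lborel (\<lambda>x. k * indicator {c<..d} x :: real)" using Ii by simp
  have V: "integral\<^sup>L lborel (\<lambda>x. k * indicator {c<..d} x :: real) = k * (d - c)"
  proof -
    have "measure lborel {c<..d} = d - c" using assms by (simp add: measure_def)
    then show ?thesis by simp
  qed
  show ?thesis
    unfolding integrable_restrict_space[OF S] integral_restrict_space[OF S] eq
    using integrable_completion[OF m] integral_completion[OF m] I V by argo
qed

lemma mono_closure:
  fixes F :: "real \<Rightarrow> real"
  assumes cont: "continuous_on {lo..hi} F" and m: "\<And>c d. lo < c \<Longrightarrow> c < d \<Longrightarrow> d < hi \<Longrightarrow> F c \<le> F d"
    and cd: "lo \<le> c" "c \<le> d" "d \<le> hi"
  shows "F c \<le> F d"
proof (cases "c = d")
  case True then show ?thesis by simp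
next
  case False
  then have cd': "c < d" using cd by simp
  define m0 where "m0 = (c + d) / 2"
  have m0: "c < m0" "m0 < d" using cd' unfolding m0_def by argo+
  have "F c \<le> F m0"
  proof (rule tendsto_upperbound)
    have "(F \<longlongrightarrow> F c) (at c within {lo..hi})" using cont cd unfolding continuous_on_def by auto
    then show "(F \<longlongrightarrow> F c) (at c within {c..m0})"
      by (rule tendsto_within_subset) (use cd m0 in auto)
    have "\<forall>t. t \<noteq> c \<longrightarrow> t \<in> {c..m0} \<longrightarrow> F t \<le> F m0"
    proof (intro allI impI)
      fix t assume tc: "t \<noteq> c" and t: "t \<in> {c..m0}"
      show "F t \<le> F m0"
      proof (cases "t = m0")
        case False then show ?thesis by (intro m) (use t tc cd m0 in auto)
      qed simp
    qed
    then show "eventually (\<lambda>t. F t \<le> F m0) (at c within {c..m0})"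
      unfolding eventually_at_filter by (rule always_eventually)
    show "\<not> trivial_limit (at c within {c..m0})"
      using m0 by (simp add: at_within_Icc_at_right)
  qed
  moreover have "F m0 \<le> F d"
  proof (rule tendsto_lowerbound)
    have "(F \<longlongrightarrow> F d) (at d within {lo..hi})" using cont cd unfolding continuous_on_def by auto
    then show "(F \<longlongrightarrow> F d) (at d within {m0..d})"
      by (rule tendsto_within_subset) (use cd m0 in auto)
    have "\<forall>t. t \<noteq> d \<longrightarrow> t \<in> {m0..d} \<longrightarrow> F m0 \<le> F t"
    proof (intro allI impI)
      fix t assume tc: "t \<noteq> d" and t: "t \<in> {m0..d}"
      show "F m0 \<le> F t"
      proof (cases "t = m0")
        case False then show ?thesis by (intro m) (use t tc cd m0 in auto)
      qed simp
    qed
    then show "eventually (\<lambda>t. F m0 \<le> F t) (at d within {m0..d})"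
      unfolding eventually_at_filter by (rule always_eventually)
    show "\<not> trivial_limit (at d within {m0..d})"
      using m0 by (simp add: at_within_Icc_at_left)
  qed
  ultimately show ?thesis by simp
qed

theorem mainTheorem5:
  fixes L \<alpha> \<beta> A B x0 M :: real
    and a l w w' :: "real \<Rightarrow> real"
    and \<phi> :: "real \<Rightarrow> ereal"
  assumes L_pos: "L > 0"
    and Ha_meas: "a \<in> borel_measurable (lebesgue_on {0<..<L})"
    and Ha_const: "0 < \<alpha>" "\<alpha> < \<beta>"
    and Ha_bounds: "AE x in lebesgue. x \<in> {0<..<L} \<longrightarrow> \<alpha> \<le> a x \<and> a x \<le> \<beta>"
    and l_L2: "L2_on L l"
    and phi_cont: "continuous_on UNIV \<phi>"
    and phi_not_minf: "\<And>s. \<phi> s \<noteq> -\<infinity>"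
    and phi_fin: "\<And>s. s \<noteq> 0 \<Longrightarrow> \<phi> s < \<infinity>"
    and phi_0: "\<phi> 0 = \<infinity>"
    and w_H1: "H1_with_deriv L w w'"
    and phiw_fin: "AE x in lebesgue. x \<in> {0<..<L} \<longrightarrow> \<phi> (w x) \<noteq> \<infinity>"
    and phiw_L2: "L2_on L (\<lambda>x. real_of_ereal (\<phi> (w x)))"
    and eq: "distr_eq_on L (\<lambda>x. a x * w' x) (\<lambda>x. real_of_ereal (\<phi> (w x)) + l x)"
    and AB: "0 \<le> A" "A < B" "B \<le> L"
    and x0: "x0 \<in> {A..B}" "w x0 = 0"
    and M: "M > 0" "AE x in lebesgue. x \<in> {A..B} \<longrightarrow> l x \<ge> - M"
  shows "\<forall>k>0. \<exists>\<delta>>0.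
           (AE x in lebesgue. x \<in> {x0-\<delta>..x0+\<delta>} \<inter> {A..B} \<longrightarrow> w' x \<ge> k) \<and>
           (\<forall>x \<in> {x0..x0+\<delta>} \<inter> {A..B}. w x \<ge> k * (x - x0)) \<and>
           (\<forall>x \<in> {x0-\<delta>..x0} \<inter> {A..B}. w x \<le> k * (x - x0))"
proof (intro allI impI)
  fix k :: real assume k: "k > 0"
  let ?M = "lebesgue_on {0<..<L}"
  have S: "{0<..<L} \<inter> space lebesgue \<in> sets lebesgue" by simp
  have wc: "continuous_on {0..L} w" and w'L: "L2_on L w'"
    using w_H1 unfolding H1_with_deriv_def by blast+
  have w'i: "integrable ?M w'" using w'L by (rule L2_int)
  have aM: "AE x in ?M. \<alpha> \<le> a x \<and> a x \<le> \<beta>"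
    using Ha_bounds by (subst AE_restrict_space_iff[OF S])
  have awi: "integrable ?M (\<lambda>x. a x * w' x)"
  proof (rule Bochner_Integration.integrable_bound)
    show "integrable ?M (\<lambda>x. \<beta> * w' x)" using w'i by simp
    show "(\<lambda>x. a x * w' x) \<in> borel_measurable ?M"
      using Ha_meas borel_measurable_integrable[OF w'i] by (rule borel_measurable_times)
    show "AE x in ?M. norm (a x * w' x) \<le> norm (\<beta> * w' x)"
      using aM
    proof eventually_elim
      case (elim x)
      then have "\<bar>a x\<bar> \<le> \<bar>\<beta>\<bar>" using Ha_const by simp
      then show ?case by (simp add: abs_mult mult_right_mono)
    qed
  qed
  have fi: "integrable ?M (\<lambda>x. real_of_ereal (\<phi> (w x)) + l x)"
    using L2_int[OF phiw_L2] L2_int[OF l_L2] by (rule Bochner_Integration.integrable_add)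
  have gi: "integrable ?M (\<lambda>x. a x * w' x - (real_of_ereal (\<phi> (w x)) + l x))"
    using awi fi by (rule Bochner_Integration.integrable_diff)
  have z: "integral\<^sup>L ?M (\<lambda>t. (a t * w' t - (real_of_ereal (\<phi> (w t)) + l t)) * indicator {c<..d} t) = 0"
    if cd: "0 < c" "c \<le> d" "d < L" for c d
  proof -
    have e: "integral\<^sup>L ?M (\<lambda>t. a t * w' t * indicator {c<..d} t) =
        integral\<^sup>L ?M (\<lambda>t. (real_of_ereal (\<phi> (w t)) + l t) * indicator {c<..d} t)"
      by (rule distr_int[OF eq awi fi cd])
    have "(\<lambda>t. (a t * w' t - (real_of_ereal (\<phi> (w t)) + l t)) * indicator {c<..d} t)
        = (\<lambda>t. a t * w' t * indicator {c<..d} t - (real_of_ereal (\<phi> (w t)) + l t) * indicator {c<..d} t)"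
      by (simp add: fun_eq_iff left_diff_distrib)
    then show ?thesis
      using Bochner_Integration.integral_diff[OF int_ind[OF awi] int_ind[OF fi], of c d] e by simp
  qed
  have AEeq: "AE x in lebesgue. x \<in> {0<..<L} \<longrightarrow> a x * w' x - (real_of_ereal (\<phi> (w x)) + l x) = 0"
    by (rule zero_all[OF gi L_pos z]) auto
  define K where "K = \<beta> * k + M"
  have "isCont \<phi> 0" using phi_cont by (simp add: continuous_on_eq_continuous_at)
  then have "(\<phi> \<longlongrightarrow> \<infinity>) (at 0)" using phi_0 by (simp add: isCont_def)
  then have "eventually (\<lambda>s. ereal K < \<phi> s) (at 0)"
    by (rule order_tendstoD(1)) simp
  then obtain \<eta> where \<eta>: "\<eta> > 0" "\<And>s. s \<noteq> 0 \<Longrightarrow> dist s 0 < \<eta> \<Longrightarrow> ereal K < \<phi> s"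
    unfolding eventually_at by blast
  have x0L: "x0 \<in> {0..L}" using x0 AB by auto
  obtain \<delta> where \<delta>: "\<delta> > 0" "\<And>x. x \<in> {0..L} \<Longrightarrow> dist x x0 < \<delta> \<Longrightarrow> dist (w x) (w x0) < \<eta>"
    using wc x0L \<eta>(1) unfolding continuous_on_iff by metis
  define d0 where "d0 = \<delta> / 2"
  have d0: "d0 > 0" "d0 < \<delta>" using \<delta>(1) unfolding d0_def by argo+
  have AEk: "AE x in lebesgue. x \<in> {x0-d0..x0+d0} \<inter> {A..B} \<longrightarrow> w' x \<ge> k"
    using AEeq Ha_bounds phiw_fin M(2) AE_completion[OF AE_lborel_singleton[of 0]]
      AE_completion[OF AE_lborel_singleton[of L]]
  proof eventually_elim
    case (elim x)
    show ?case
    proof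
      assume xI: "x \<in> {x0-d0..x0+d0} \<inter> {A..B}"
      have xL: "x \<in> {0<..<L}" using xI elim(5,6) AB by auto
      have xd: "dist x x0 < \<delta>" using xI d0 by (auto simp: dist_real_def)
      have wx: "\<bar>w x\<bar> < \<eta>" using \<delta>(2)[OF _ xd] xL x0(2) by (auto simp: dist_real_def)
      have fin: "\<phi> (w x) \<noteq> \<infinity>" using elim(3) xL by blast
      have wx0: "w x \<noteq> 0" using fin phi_0 by auto
      have Kl: "ereal K < \<phi> (w x)" using \<eta>(2)[OF wx0] wx by (simp add: dist_real_def)
      obtain r where r: "\<phi> (w x) = ereal r" using fin phi_not_minf[of "w x"] by (cases "\<phi> (w x)") auto
      have Kr: "K < r" using Kl r by simp
      have lx: "l x \<ge> - M" using elim(4) xI by auto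
      have ab: "\<alpha> \<le> a x" "a x \<le> \<beta>" using elim(2) xL by auto
      have eqx: "a x * w' x = r + l x" using elim(1) xL r by simp
      have big: "a x * w' x > \<beta> * k" using eqx Kr lx unfolding K_def by linarith
      show "w' x \<ge> k"
      proof (rule ccontr)
        assume "\<not> w' x \<ge> k"
        then have "w' x < k" by simp
        then have "a x * w' x < a x * k" using ab Ha_const by (intro mult_strict_left_mono) auto
        also have "\<dots> \<le> \<beta> * k" using ab k by (intro mult_right_mono) auto
        finally show False using big by simp
      qed
    qed
  qed
  define lo where "lo = max (x0 - d0) A"
  define hi where "hi = min (x0 + d0) B"
  define F where "F y = w y - k * y" for y
  have lohi: "0 \<le> lo" "hi \<le> L" "lo \<le> x0" "x0 \<le> hi"
    using AB x0 d0 unfolding lo_def hi_def by auto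
  have Fc: "continuous_on {lo..hi} F"
  proof -
    have "continuous_on {lo..hi} w" by (rule continuous_on_subset[OF wc]) (use lohi in auto)
    then show ?thesis unfolding F_def[abs_def] by (intro continuous_intros)
  qed
  have Fm: "F c \<le> F d" if cd: "lo < c" "c < d" "d < hi" for c d
  proof -
    have c0: "0 < c" "d < L" using cd lohi by auto
    have cdI: "{c<..d} \<subseteq> {x0-d0..x0+d0} \<inter> {A..B}" using cd unfolding lo_def hi_def by auto
    have ic: "integrable ?M (\<lambda>t. k * indicator {c<..d} t)" and vc: "integral\<^sup>L ?M (\<lambda>t. k * indicator {c<..d} t) = k * (d - c)"
      using int_const[of c d L k] c0 cd by auto
    have "k * (d - c) \<le> integral\<^sup>L ?M (\<lambda>t. w' t * indicator {c<..d} t)"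
      unfolding vc[symmetric]
    proof (rule integral_mono_AE[OF ic int_ind[OF w'i]])
      have "AE x in ?M. x \<in> {x0-d0..x0+d0} \<inter> {A..B} \<longrightarrow> w' x \<ge> k"
        using AEk by (subst AE_restrict_space_iff[OF S]) (auto elim: AE_mp)
      then show "AE x in ?M. k * indicator {c<..d} x \<le> w' x * indicator {c<..d} x"
      proof eventually_elim
        case (elim x) then show ?case using cdI by (auto simp: indicator_def)
      qed
    qed
    also have "\<dots> = w d - w c" using ftc[OF w_H1 c0(1) cd(2) c0(2)] by simp
    finally show ?thesis unfolding F_def by (simp add: algebra_simps)
  qed
  have Fmono: "F c \<le> F d" if "lo \<le> c" "c \<le> d" "d \<le> hi" for c d
    by (rule mono_closure[OF Fc Fm that])
  show "\<exists>\<delta>>0. (AE x in lebesgue. x \<in> {x0-\<delta>..x0+\<delta>} \<inter> {A..B} \<longrightarrow> w' x \<ge> k) \<and>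
           (\<forall>x \<in> {x0..x0+\<delta>} \<inter> {A..B}. w x \<ge> k * (x - x0)) \<and>
           (\<forall>x \<in> {x0-\<delta>..x0} \<inter> {A..B}. w x \<le> k * (x - x0))"
  proof (intro exI[of _ d0] conjI ballI)
    show "d0 > 0" by (rule d0(1))
    show "AE x in lebesgue. x \<in> {x0-d0..x0+d0} \<inter> {A..B} \<longrightarrow> w' x \<ge> k" by (rule AEk)
  next
    fix x assume x: "x \<in> {x0..x0+d0} \<inter> {A..B}"
    then have "lo \<le> x0" "x0 \<le> x" "x \<le> hi" using lohi unfolding hi_def by auto
    then have "F x0 \<le> F x" by (intro Fmono)
    then show "w x \<ge> k * (x - x0)" using x0(2) unfolding F_def by (simp add: algebra_simps)
  next
    fix x assume x: "x \<in> {x0-d0..x0} \<inter> {A..B}"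
    then have "lo \<le> x" "x \<le> x0" "x0 \<le> hi" using lohi unfolding lo_def by auto
    then have "F x \<le> F x0" by (intro Fmono)
    then show "w x \<le> k * (x - x0)" using x0(2) unfolding F_def by (simp add: algebra_simps)
  qed
qed


end
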